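(* Let $\lambda\ge0$, $n\ge0$ an integer and $x\in[-1,1]$. Then $$I^\lambda_+C^{\lambda+1/2}_n(x)=c_{n,\lambda}\frac{\lambda+\frac12}{\lambda+n+\frac12}(1+x)\,{}_2F_1\!\Big(-n,\,n+2\lambda+1;\,\lambda+\tfrac12;\,\tfrac{1-x}2\Big),$$ $$I^\lambda_-C^{\lambda+1/2}_n(x)=c_{n,\lambda}(1-x)\,{}_2F_1\!\Big(-n,\,n+2\lambda+1;\,\lambda+\tfrac32;\,\tfrac{1-x}2\Big),$$ where $c_{n,\lambda}=\frac{\sqrt\pi(2\lambda+1)_n}{n!}\frac{\Gamma(\lambda+1)}{\Gamma(\lambda+\frac32)}$.
   Context: $C^\mu_n$ are Gegenbauer polynomials with generating function $(1-2xr+r^2)^{-\mu}$; ${}_2F_1$ is the Gauss hypergeometric function (terminating here) and $(a)_k$ the Pochhammer symbol. For $f\in L^1[-1,1]$ and $\lambda\ge0$: $I^\lambda_+f(x)=(1+x)^{-\lambda+1/2}\int_{-1}^x(x-\tau)^{-1/2}(1+\tau)^\lambda f(\tau)\,d\tau$, $I^\lambda_-f(x)=(1-x)^{-\lambda+1/2}\int_x^1(\tau-x)^{-1/2}(1-\tau)^\lambda f(\tau)\,d\tau$. *)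

theory Defs
  imports "HOL-Analysis.Analysis" "HOL-Computational_Algebra.Formal_Power_Series"
begin

text \<open>Gegenbauer polynomial C^mu_n(x): the n-th coefficient of the power series in r of
  (1 - 2 x r + r^2)^(-mu) = (1 + u)^(-mu) composed with u = -2 x r + r^2.\<close>
definition gegenbauer :: "real \<Rightarrow> nat \<Rightarrow> real \<Rightarrow> real" where
  "gegenbauer mu n x =
     fps_nth (fps_compose (fps_binomial (- mu)) (fps_const (-2 * x) * fps_X + fps_X ^ 2)) n"

definition hyp2F1_term :: "nat \<Rightarrow> real \<Rightarrow> real \<Rightarrow> real \<Rightarrow> real" where
  "hyp2F1_term n b c z =
     (\<Sum>k\<le>n. pochhammer (- real n) k * pochhammer b k / (pochhammer c k * fact k) * z ^ k)"

definition I_plus :: "real \<Rightarrow> (real \<Rightarrow> real) \<Rightarrow> real \<Rightarrow> real" where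
  "I_plus lam f x = (1 + x) powr (- lam + 1/2) *
     integral {-1..x} (\<lambda>t. (x - t) powr (-1/2) * (1 + t) powr lam * f t)"

definition I_minus :: "real \<Rightarrow> (real \<Rightarrow> real) \<Rightarrow> real \<Rightarrow> real" where
  "I_minus lam f x = (1 - x) powr (- lam + 1/2) *
     integral {x..1} (\<lambda>t. (t - x) powr (-1/2) * (1 - t) powr lam * f t)"

definition c_const :: "nat \<Rightarrow> real \<Rightarrow> real" where
  "c_const n lam = sqrt pi * pochhammer (2 * lam + 1) n / fact n * (Gamma (lam + 1) / Gamma (lam + 3/2))"

end

theory Submission
  imports Defs
begin


lemma geg_ode:
  fixes mu x :: real
  defines "F \<equiv> fps_compose (fps_binomial (- mu)) (fps_const (-2 * x) * fps_X + fps_X ^ 2)"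
  shows "(1 + fps_const (-2 * x) * fps_X + fps_X ^ 2) * fps_deriv F
         = fps_const (- mu) * F * (fps_const (-2 * x) + fps_const 2 * fps_X)"
proof -
  define B where "B = fps_binomial (- mu)"
  define g where "g = fps_const (-2 * x) * fps_X + (fps_X ^ 2 :: real fps)"
  have g0: "fps_nth g 0 = 0" by (simp add: g_def)
  have dB: "(1 + fps_X) * fps_deriv B = fps_const (- mu) * B"
  proof -
    have u: "is_unit (1 + fps_X :: real fps)" by (simp add: fps_is_unit_iff)
    show ?thesis unfolding B_def fps_binomial_deriv
      using u by (simp add: unit_div_mult_self)
  qed
  have "((1 + fps_X) * fps_deriv B) oo g = (1 + g) * (fps_deriv B oo g)"
    by (simp add: fps_compose_mult_distrib[OF g0] fps_compose_add_distrib g0)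
  moreover have "(fps_const (- mu) * B) oo g = fps_const (-mu) * (B oo g)"
    by (simp add: fps_compose_mult_distrib[OF g0])
  ultimately have e1: "(1 + g) * (fps_deriv B oo g) = fps_const (-mu) * (B oo g)"
    using dB by simp
  have dF: "fps_deriv (B oo g) = (fps_deriv B oo g) * fps_deriv g"
    by (rule fps_compose_deriv[OF g0])
  have dg: "fps_deriv g = fps_const (-2 * x) + fps_const 2 * fps_X"
    by (simp add: g_def fps_deriv_power numeral_2_eq_2 fps_const_add [symmetric])
  have "(1 + g) * fps_deriv (B oo g) = fps_const (-mu) * (B oo g) * fps_deriv g"
    using e1 dF by (metis mult.assoc)
  then show ?thesis unfolding F_def B_def[symmetric] g_def[symmetric] dg
    by (simp add: g_def add.assoc)
qed

lemma geg_coeffs: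
  fixes mu x :: real
  shows "gegenbauer mu 0 x = 1" and "gegenbauer mu 1 x = 2 * mu * x"
    and "(real n + 2) * gegenbauer mu (n + 2) x
          = 2 * x * (real n + 1 + mu) * gegenbauer mu (n + 1) x - (real n + 2 * mu) * gegenbauer mu n x"
proof -
  define F where "F = fps_compose (fps_binomial (- mu)) (fps_const (-2 * x) * fps_X + fps_X ^ 2)"
  have G: "gegenbauer mu m x = fps_nth F m" for m by (simp add: gegenbauer_def F_def)
  have ode: "fps_deriv F + fps_const (-2 * x) * (fps_X * fps_deriv F) + fps_X ^ 2 * fps_deriv F
         = fps_const (- mu * (-2 * x)) * F + fps_const (-2 * mu) * (fps_X * F)"
  proof -
    have "(1 + fps_const (-2 * x) * fps_X + fps_X ^ 2) * fps_deriv F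
        = fps_deriv F + fps_const (-2 * x) * (fps_X * fps_deriv F) + fps_X ^ 2 * fps_deriv F"
      by (simp only: distrib_right mult_1 mult.assoc)
    moreover have "fps_const (- mu) * F * (fps_const (-2 * x) + fps_const 2 * fps_X)
        = fps_const (- mu) * fps_const (-2 * x) * F + fps_const (- mu) * fps_const 2 * (fps_X * F)"
      by (simp only: distrib_left mult_ac)
    moreover have "fps_const (- mu) * fps_const (-2 * x) = fps_const (- mu * (-2 * x))"
       "fps_const (- mu) * fps_const 2 = (fps_const (-2 * mu) :: real fps)"
      by (simp_all only: fps_const_mult) simp
    ultimately show ?thesis using geg_ode[where mu=mu and x=x] unfolding F_def[symmetric] by simp
  qed
  show "gegenbauer mu 0 x = 1" by (simp add: G F_def)
  have "fps_nth (fps_deriv F + fps_const (-2 * x) * (fps_X * fps_deriv F) + fps_X ^ 2 * fps_deriv F) 0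
       = fps_nth (fps_const (- mu * (-2 * x)) * F + fps_const (-2 * mu) * (fps_X * F)) 0"
    using ode by simp
  then show "gegenbauer mu 1 x = 2 * mu * x"
    by (simp add: G fps_X_power_mult_nth F_def)
  have "fps_nth (fps_deriv F + fps_const (-2 * x) * (fps_X * fps_deriv F) + fps_X ^ 2 * fps_deriv F) (Suc n)
       = fps_nth (fps_const (- mu * (-2 * x)) * F + fps_const (-2 * mu) * (fps_X * F)) (Suc n)"
    using ode by simp
  then have "(real n + 2) * fps_nth F (n+2) + (-2*x) * ((real n + 1) * fps_nth F (n+1)) + real n * fps_nth F n
      = 2 * mu * x * fps_nth F (n+1) - 2 * mu * fps_nth F n"
    by (cases n) (simp_all add: fps_X_power_mult_nth fps_deriv_nth)
  then show "(real n + 2) * gegenbauer mu (n + 2) x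
          = 2 * x * (real n + 1 + mu) * gegenbauer mu (n + 1) x - (real n + 2 * mu) * gegenbauer mu n x"
    unfolding G by (simp add: algebra_simps)
qed



definition ecoef :: "real \<Rightarrow> nat \<Rightarrow> nat \<Rightarrow> real" where
  "ecoef mu m k = pochhammer (2 * mu) m / fact m *
     (pochhammer (- real m) k * pochhammer (real m + 2 * mu) k / (pochhammer (mu + 1/2) k * fact k))"

lemma ecoef_rec_Suc:
  fixes mu :: real assumes mu: "mu > 0"
  shows "(real n + 2) * ecoef mu (n+2) (Suc j) = 2 * (real n + 1 + mu) * ecoef mu (n+1) (Suc j)
     - 4 * (real n + 1 + mu) * ecoef mu (n+1) j - (real n + 2 * mu) * ecoef mu n (Suc j)"
proof -
  define p where "p = pochhammer (2 * mu) n"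
  define f where "f = (fact n :: real)"
  define P where "P = pochhammer (- real n) j"
  define R where "R = pochhammer (- real (n+1)) j"
  define V where "V = pochhammer (real n + 1 + 2 * mu) j"
  define A where "A = pochhammer (mu + 1/2) j"
  define J where "J = (fact j :: real)"
  have f0: "f > 0" unfolding f_def by simp
  have J0: "J > 0" unfolding J_def by simp
  have A0: "A > 0" unfolding A_def using mu by (intro pochhammer_pos) simp
  have h1: "pochhammer (- real (n+2)) (Suc j) = - (real n + 2) * R"
  proof -
    have e: "- real (n+2) + 1 = - real (n+1)" by simp
    show ?thesis unfolding pochhammer_rec e R_def by simp
  qed
  have h2: "pochhammer (- real (n+1)) (Suc j) = - (real n + 1) * P"
    unfolding P_def pochhammer_rec by (simp add: algebra_simps)
  have h2': "pochhammer (- real (n+1)) j = R"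
    unfolding R_def by simp
  have h3: "pochhammer (- real n) (Suc j) = P * (- real n + real j)"
    unfolding P_def pochhammer_rec' by simp
  have h4: "R * (real j - real n - 1) = - (real n + 1) * P"
  proof -
    have "pochhammer (- real (n+1)) (Suc j) = R * (- real (n+1) + real j)"
      unfolding R_def pochhammer_rec' by simp
    then show ?thesis using h2 by (simp add: algebra_simps)
  qed
  have h4old: True
  proof -
    have True by simp
    then show ?thesis by (simp add: algebra_simps)
  qed
  have h5: "pochhammer (real (n+2) + 2 * mu) (Suc j)
            = V * (real n + 1 + 2 * mu + real j) * (real n + 2 + 2 * mu + real j) / (real n + 1 + 2 * mu)"
  proof -
    have "pochhammer (real n + 1 + 2 * mu) (Suc (Suc j))
        = V * (real n + 1 + 2 * mu + real j) * (real n + 2 + 2 * mu + real j)"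
      unfolding V_def pochhammer_rec' by (simp add: algebra_simps)
    moreover have "pochhammer (real n + 1 + 2 * mu) (Suc (Suc j))
        = (real n + 1 + 2 * mu) * pochhammer (real (n+2) + 2 * mu) (Suc j)"
      unfolding pochhammer_rec[of _ "Suc j"] by (simp add: algebra_simps)
    moreover have "real n + 1 + 2 * mu > 0" using mu by simp
    ultimately show ?thesis by (simp add: field_simps)
  qed
  have h6: "pochhammer (real (n+1) + 2 * mu) (Suc j) = V * (real n + 1 + 2 * mu + real j)"
    unfolding V_def pochhammer_rec' by (simp add: algebra_simps)
  have h6': "pochhammer (real (n+1) + 2 * mu) j = V"
    unfolding V_def by (simp add: algebra_simps)
  have h7: "pochhammer (real n + 2 * mu) (Suc j) = (real n + 2 * mu) * V"
    unfolding V_def pochhammer_rec by (simp add: algebra_simps)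
  define N1 where "N1 = real n + 1"
  define N2 where "N2 = real n + 2"
  define Aj where "Aj = mu + 1/2 + real j"
  define J1 where "J1 = real j + 1"
  define S1 where "S1 = real n + 1 + 2 * mu"
  define Dj where "Dj = real j - real n - 1"
  have h9: "pochhammer (mu + 1/2) (Suc j) = A * Aj"
    unfolding A_def Aj_def pochhammer_rec' by simp
  have h9': "(fact (Suc j) :: real) = J1 * J"
    unfolding J_def J1_def by simp
  have h10: "pochhammer (2 * mu) (n+2) = p * (2 * mu + real n) * (2 * mu + real n + 1)"
    "pochhammer (2 * mu) (n+1) = p * (2 * mu + real n)"
    unfolding p_def by (simp_all add: pochhammer_rec' algebra_simps)
  have h11: "(fact (n+2) :: real) = f * N1 * N2"
    "(fact (n+1) :: real) = f * N1"
    unfolding f_def N1_def N2_def by (simp_all add: algebra_simps)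
  have h5': "pochhammer (real (n+2) + 2 * mu) (Suc j)
            = V * (real n + 1 + 2 * mu + real j) * (real n + 2 + 2 * mu + real j) / S1"
    using h5 unfolding S1_def .
  have nz: "A \<noteq> 0" "J \<noteq> 0" "f \<noteq> 0" "S1 \<noteq> 0" "Aj \<noteq> 0" "N1 \<noteq> 0" "N2 \<noteq> 0" "J1 \<noteq> 0"
    using A0 J0 f0 mu unfolding S1_def Aj_def N1_def N2_def J1_def by auto
  define K where "K = p * V / (f * A * J)"
  define c1 where "c1 = 2 * mu + real n"
  define c2 where "c2 = real n + 1 + 2 * mu + real j"
  define c3 where "c3 = real n + 2 + 2 * mu + real j"
  have E1: "ecoef mu (n+2) (Suc j) = K * R * (- c1 * (c1 + 1) * c2 * c3 / (N1 * S1 * Aj * J1))"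
    unfolding ecoef_def
    apply (simp only: h1 h5' h9 h9' h10 h11 V_def[symmetric]
         A_def[symmetric] J_def[symmetric] p_def[symmetric] f_def[symmetric])
    using nz unfolding K_def c1_def[symmetric] c2_def[symmetric] c3_def[symmetric]
    by (simp add: field_simps; simp add: N1_def N2_def c1_def c2_def c3_def algebra_simps)
  have E2: "ecoef mu (n+1) (Suc j) = K * P * (- c1 * c2 / (Aj * J1))"
    unfolding ecoef_def
    apply (simp only: h2 h6 h9 h9' h10 h11 P_def[symmetric] V_def[symmetric]
         A_def[symmetric] J_def[symmetric] p_def[symmetric] f_def[symmetric])
    using nz unfolding K_def c1_def[symmetric] c2_def[symmetric] N1_def[symmetric]
    by (simp add: field_simps; simp add: N1_def N2_def c1_def c2_def c3_def algebra_simps)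
  have E3: "ecoef mu (n+1) j = K * R * (c1 / N1)"
    unfolding ecoef_def
    apply (simp only: h2' h6' h10 h11 V_def[symmetric]
         A_def[symmetric] J_def[symmetric] p_def[symmetric] f_def[symmetric])
    using nz unfolding K_def c1_def[symmetric]
    by (simp add: field_simps; simp add: N1_def N2_def c1_def c2_def c3_def algebra_simps)
  have E4: "ecoef mu n (Suc j) = K * P * ((real j - real n) * (real n + 2 * mu) / (Aj * J1))"
    unfolding ecoef_def
    apply (simp only: h3 h7 h9 h9' P_def[symmetric] V_def[symmetric]
         A_def[symmetric] J_def[symmetric] p_def[symmetric] f_def[symmetric])
    using nz unfolding K_def
    by (simp add: field_simps; simp add: N1_def N2_def c1_def c2_def c3_def algebra_simps)
  define r1 where "r1 = - c1 * (c1 + 1) * c2 * c3 / (N1 * S1 * Aj * J1)"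
  define r2 where "r2 = - c1 * c2 / (Aj * J1)"
  define r3 where "r3 = c1 / N1"
  define r4 where "r4 = (real j - real n) * (real n + 2 * mu) / (Aj * J1)"
  note Es = E1[folded r1_def] E2[folded r2_def] E3[folded r3_def] E4[folded r4_def]
  show ?thesis
  proof (cases "j = n + 1")
    case True
    have P0: "P = 0" unfolding P_def True by (simp add: pochhammer_eq_0_iff)
    have key: "(real n + 2) * r1 = - 4 * (real n + 1 + mu) * r3"
      unfolding r1_def r3_def using nz
      by (simp add: field_simps; simp add: N1_def S1_def Aj_def J1_def c1_def c2_def c3_def True algebra_simps)
    have "K * R * ((real n + 2) * r1) = K * R * (- 4 * (real n + 1 + mu) * r3)"
      by (simp only: key)
    then show ?thesis unfolding Es P0 by (simp add: algebra_simps)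
  next
    case False
    have a3: "Dj \<noteq> 0" using False unfolding Dj_def by simp
    define q where "q = - N1 / Dj"
    have Rv: "R = q * P"
      using h4 a3 unfolding Dj_def[symmetric] q_def N1_def by (simp add: field_simps)
    have key: "(real n + 2) * (q * r1) = 2 * (real n + 1 + mu) * r2 - 4 * (real n + 1 + mu) * (q * r3)
       - (real n + 2 * mu) * r4"
    proof -
      have S1c: "S1 = c1 + 1" unfolding S1_def c1_def by simp
      have key0: "(real n + 2) * c2 * c3 = - 2 * (real n + 1 + mu) * c2 * Dj
          + 4 * (real n + 1 + mu) * Aj * J1 - (real j - real n) * c1 * Dj"
        unfolding c1_def c2_def c3_def Dj_def Aj_def J1_def by (simp add: algebra_simps)
      have qr1: "q * r1 = c1 * c2 * c3 / (Dj * Aj * J1)"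
        unfolding q_def r1_def S1c[symmetric] using nz a3 by (simp add: field_simps)
      have qr3: "q * r3 = - c1 / Dj"
        unfolding q_def r3_def using nz a3 by (simp add: field_simps)
      have cc: "real n + 2 * mu = c1" unfolding c1_def by simp
      have L: "(real n + 2) * (q * r1) = c1 / (Dj * Aj * J1) * ((real n + 2) * c2 * c3)"
        unfolding qr1 using nz a3 by (simp add: field_simps)
      have R: "2 * (real n + 1 + mu) * r2 - 4 * (real n + 1 + mu) * (q * r3) - (real n + 2 * mu) * r4
          = c1 / (Dj * Aj * J1) * (- 2 * (real n + 1 + mu) * c2 * Dj
          + 4 * (real n + 1 + mu) * Aj * J1 - (real j - real n) * c1 * Dj)"
        unfolding qr3 r2_def r4_def cc using nz a3 by (simp add: field_simps)
      show ?thesis unfolding L R key0 ..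
    qed
    have "K * P * ((real n + 2) * (q * r1)) = K * P * (2 * (real n + 1 + mu) * r2 - 4 * (real n + 1 + mu) * (q * r3)
       - (real n + 2 * mu) * r4)"
      by (simp only: key)
    then show ?thesis unfolding Es Rv by (simp add: algebra_simps)
  qed
qed

lemma ecoef_zero: "m < k \<Longrightarrow> ecoef mu m k = 0"
  unfolding ecoef_def by (simp add: pochhammer_of_nat_eq_0_lemma)

lemma ecoef_rec_0:
  fixes mu :: real assumes mu: "mu > 0"
  shows "(real n + 2) * ecoef mu (n+2) 0 = 2 * (real n + 1 + mu) * ecoef mu (n+1) 0
     - (real n + 2 * mu) * ecoef mu n 0"
proof -
  define p where "p = pochhammer (2 * mu) n"
  define f where "f = (fact n :: real)"
  define N1 where "N1 = real n + 1"
  define N2 where "N2 = real n + 2"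
  have nz: "f \<noteq> 0" "N1 \<noteq> 0" "N2 \<noteq> 0" unfolding f_def N1_def N2_def by simp_all
  have h10: "pochhammer (2 * mu) (n+2) = p * (2 * mu + real n) * (2 * mu + real n + 1)"
    "pochhammer (2 * mu) (n+1) = p * (2 * mu + real n)"
    unfolding p_def by (simp_all add: pochhammer_rec' algebra_simps)
  have h11: "(fact (n+2) :: real) = f * N1 * N2"
    "(fact (n+1) :: real) = f * N1"
    unfolding f_def N1_def N2_def by (simp_all add: algebra_simps)
  show ?thesis unfolding ecoef_def
    apply (simp only: h10 h11 p_def[symmetric] f_def[symmetric])
    using nz by (simp add: field_simps; simp add: N1_def N2_def algebra_simps)
qed

definition Epoly :: "real \<Rightarrow> nat \<Rightarrow> real \<Rightarrow> real" where
  "Epoly mu m z = (\<Sum>k\<le>m. ecoef mu m k * z ^ k)"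

lemma Epoly_ext: "m \<le> N \<Longrightarrow> Epoly mu m z = (\<Sum>k\<le>N. ecoef mu m k * z ^ k)"
  unfolding Epoly_def
  by (rule sum.mono_neutral_left) (auto simp: ecoef_zero)

lemma Epoly_rec:
  fixes mu :: real assumes mu: "mu > 0"
  shows "(real n + 2) * Epoly mu (n+2) z = 2 * (1 - 2 * z) * (real n + 1 + mu) * Epoly mu (n+1) z
     - (real n + 2 * mu) * Epoly mu n z"
proof -
  define c where "c = real n + 1 + mu"
  define d where "d = real n + 2 * mu"
  define g where "g k = (2 * c * ecoef mu (n+1) k - d * ecoef mu n k - (real n + 2) * ecoef mu (n+2) k) * z ^ k" for k
  define h where "h k = ecoef mu (n+1) k * z ^ Suc k" for k
  have gS: "g (Suc k) = 4 * c * h k" for k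
  proof -
    have X: "2 * c * ecoef mu (n+1) (Suc k) - d * ecoef mu n (Suc k) - (real n + 2) * ecoef mu (n+2) (Suc k)
        = 4 * c * ecoef mu (n+1) k"
      using ecoef_rec_Suc[OF mu, of n k] by (simp add: c_def d_def algebra_simps)
    show ?thesis unfolding g_def h_def X by (simp add: mult.assoc)
  qed
  have e1: "Epoly mu (n+1) z = (\<Sum>k\<le>Suc (Suc n). ecoef mu (n+1) k * z ^ k)"
    and e2: "Epoly mu n z = (\<Sum>k\<le>Suc (Suc n). ecoef mu n k * z ^ k)"
    and e3: "Epoly mu (n+2) z = (\<Sum>k\<le>Suc (Suc n). ecoef mu (n+2) k * z ^ k)"
    by (rule Epoly_ext; simp)+
  have "2 * (1 - 2 * z) * c * Epoly mu (n+1) z - d * Epoly mu n z - (real n + 2) * Epoly mu (n+2) z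
      = (\<Sum>k\<le>Suc (Suc n). g k) - 4 * c * (\<Sum>k\<le>Suc (Suc n). h k)"
    unfolding e1 e2 e3 sum_distrib_left sum_subtractf[symmetric]
    by (rule sum.cong) (simp_all add: g_def h_def algebra_simps)
  also have "(\<Sum>k\<le>Suc (Suc n). h k) = (\<Sum>k\<le>Suc n. h k)"
    by (simp add: h_def ecoef_zero)
  also have "(\<Sum>k\<le>Suc (Suc n). g k) = g 0 + (\<Sum>k\<le>Suc n. g (Suc k))"
    by (rule sum.atMost_Suc_shift)
  also have "g 0 = 0" unfolding g_def using ecoef_rec_0[OF mu, of n] by (simp add: c_def d_def)
  also have "(\<Sum>k\<le>Suc n. g (Suc k)) = 4 * c * (\<Sum>k\<le>Suc n. h k)"
    unfolding gS sum_distrib_left ..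
  finally have "2 * (1 - 2 * z) * c * Epoly mu (n+1) z - d * Epoly mu n z - (real n + 2) * Epoly mu (n+2) z = 0" by simp
  then show ?thesis by (simp add: c_def d_def algebra_simps)
qed



lemma geg_Epoly:
  fixes mu x :: real assumes mu: "mu > 0"
  shows "gegenbauer mu n x = Epoly mu n ((1 - x) / 2)"
proof -
  define z where "z = (1 - x) / 2"
  have xz: "x = 1 - 2 * z" unfolding z_def by (simp add: field_simps)
  have "gegenbauer mu n x = Epoly mu n z \<and> gegenbauer mu (n+1) x = Epoly mu (n+1) z"
  proof (induction n)
    case 0
    have "Epoly mu 0 z = 1" by (simp add: Epoly_def ecoef_def)
    moreover have "Epoly mu 1 z = 2 * mu * x"
      using mu by (simp add: Epoly_def ecoef_def xz field_simps)
    moreover have "gegenbauer mu (Suc 0) x = 2 * mu * x" using geg_coeffs(2)[of mu x] by simp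
    ultimately show ?case by (simp add: geg_coeffs)
  next
    case (Suc n)
    have "(real n + 2) * gegenbauer mu (n + 2) x = (real n + 2) * Epoly mu (n+2) z"
      unfolding geg_coeffs(3) Epoly_rec[OF mu] using Suc.IH by (simp add: xz)
    then have "gegenbauer mu (n + 2) x = Epoly mu (n+2) z" by simp
    then show ?case using Suc.IH by simp
  qed
  then show ?thesis unfolding z_def by simp
qed

lemma geg_sym:
  fixes mu x :: real
  shows "gegenbauer mu n (- x) = (-1) ^ n * gegenbauer mu n x"
proof -
  have "gegenbauer mu n (- x) = (-1) ^ n * gegenbauer mu n x \<and>
        gegenbauer mu (n+1) (- x) = (-1) ^ (n+1) * gegenbauer mu (n+1) x"
  proof (induction n)
    case 0
    have "gegenbauer mu (Suc 0) y = 2 * mu * y" for y using geg_coeffs(2)[of mu y] by simp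
    then show ?case by (simp add: geg_coeffs)
  next
    case (Suc n)
    have "(real n + 2) * gegenbauer mu (n + 2) (- x)
       = 2 * (- x) * (real n + 1 + mu) * gegenbauer mu (n + 1) (- x) - (real n + 2 * mu) * gegenbauer mu n (- x)"
      by (rule geg_coeffs(3))
    also have "\<dots> = (-1) ^ (n+2) * (2 * x * (real n + 1 + mu) * gegenbauer mu (n + 1) x - (real n + 2 * mu) * gegenbauer mu n x)"
      using Suc.IH by (simp add: algebra_simps)
    also have "\<dots> = (real n + 2) * ((-1) ^ (n+2) * gegenbauer mu (n + 2) x)"
      unfolding geg_coeffs(3)[symmetric] by simp
    finally have "(real n + 2) * gegenbauer mu (n + 2) (- x) = (real n + 2) * ((-1) ^ (n+2) * gegenbauer mu (n + 2) x)" .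
    then have "gegenbauer mu (n + 2) (- x) = (-1) ^ (n+2) * gegenbauer mu (n + 2) x" by simp
    then show ?case using Suc.IH by simp
  qed
  then show ?thesis by simp
qed



lemma coef_split:
  fixes b c :: real and n j m :: nat
  assumes c: "c > 0" and jn: "j + m \<le> n"
  shows "pochhammer (- real n) (j + m) * pochhammer b (j + m) / (pochhammer c (j + m) * fact (j + m))
         * of_nat ((j + m) choose j)
       = (pochhammer (- real n) j * pochhammer b j / (pochhammer c j * fact j)) *
         (pochhammer (b + real j) m * pochhammer (- of_nat (n - j)) m / (of_nat (fact m) * pochhammer (c + real j) m))"
proof -
  have p1: "pochhammer (- real n) (j + m) = pochhammer (- real n) j * pochhammer (- of_nat (n - j)) m"
    using jn by (simp add: pochhammer_product' of_nat_diff)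
  have p2: "pochhammer b (j + m) = pochhammer b j * pochhammer (b + real j) m"
    by (simp add: pochhammer_product')
  have p3: "pochhammer c (j + m) = pochhammer c j * pochhammer (c + real j) m"
    by (simp add: pochhammer_product')
  have bf: "(of_nat ((j + m) choose j) :: real) = fact (j + m) / (fact j * fact m)"
    by (subst binomial_fact) simp_all
  have nz: "pochhammer c j \<noteq> 0" "pochhammer (c + real j) m \<noteq> 0"
    using c by (simp_all add: pochhammer_pos less_imp_neq[symmetric] add_pos_nonneg)
  have f: "(fact j :: real) \<noteq> 0" "(fact m :: real) \<noteq> 0" "(fact (j + m) :: real) \<noteq> 0" by simp_all
  show ?thesis unfolding p1 p2 p3 bf of_nat_fact using nz f by (simp add: field_simps)
qed

lemma hyp_reflect_gen:
  fixes b c z :: real and n :: nat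
  assumes c: "c > 0"
  shows "(\<Sum>k\<le>n. pochhammer (- real n) k * pochhammer b k / (pochhammer c k * fact k) * (1 - z) ^ k)
       = (\<Sum>j\<le>n. pochhammer (- real n) j * pochhammer b j * pochhammer (c - b) (n - j)
             / (fact j * pochhammer c n) * (- z) ^ j)"
proof -
  define A where "A k = pochhammer (- real n) k * pochhammer b k / (pochhammer c k * fact k)" for k
  have bin: "(1 - z) ^ k = (\<Sum>j\<le>n. of_nat (k choose j) * (- z) ^ j)" if "k \<le> n" for k
  proof -
    have "(1 - z) ^ k = (- z + 1) ^ k" by simp
    also have "\<dots> = (\<Sum>j\<le>k. of_nat (k choose j) * (- z) ^ j)"
      by (subst binomial_ring) simp
    also have "\<dots> = (\<Sum>j\<le>n. of_nat (k choose j) * (- z) ^ j)"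
      using that by (intro sum.mono_neutral_left) auto
    finally show ?thesis .
  qed
  have "(\<Sum>k\<le>n. A k * (1 - z) ^ k) = (\<Sum>k\<le>n. \<Sum>j\<le>n. A k * of_nat (k choose j) * (- z) ^ j)"
    by (intro sum.cong refl) (simp add: bin sum_distrib_left mult.assoc)
  also have "\<dots> = (\<Sum>j\<le>n. \<Sum>k\<le>n. A k * of_nat (k choose j) * (- z) ^ j)"
    by (rule sum.swap)
  also have "\<dots> = (\<Sum>j\<le>n. pochhammer (- real n) j * pochhammer b j * pochhammer (c - b) (n - j)
             / (fact j * pochhammer c n) * (- z) ^ j)"
  proof (intro sum.cong refl)
    fix j assume j: "j \<in> {..n}"
    then have jn: "j \<le> n" by simp
    have "(\<Sum>k\<le>n. A k * of_nat (k choose j)) = (\<Sum>k\<in>{j..n}. A k * of_nat (k choose j))"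
      by (intro sum.mono_neutral_right) auto
    also have "\<dots> = (\<Sum>m\<in>{0..n-j}. A (m + j) * of_nat ((m + j) choose j))"
      using jn sum.shift_bounds_cl_nat_ivl[of "\<lambda>k. A k * of_nat (k choose j)" 0 j "n - j"] by simp
    also have "\<dots> = (\<Sum>m\<in>{0..n-j}. (pochhammer (- real n) j * pochhammer b j / (pochhammer c j * fact j)) *
         (pochhammer (b + real j) m * pochhammer (- of_nat (n - j)) m / (of_nat (fact m) * pochhammer (c + real j) m)))"
    proof (intro sum.cong refl)
      fix m assume "m \<in> {0..n-j}"
      then have "j + m \<le> n" using jn by auto
      then show "A (m + j) * of_nat ((m + j) choose j) = (pochhammer (- real n) j * pochhammer b j / (pochhammer c j * fact j)) *
         (pochhammer (b + real j) m * pochhammer (- of_nat (n - j)) m / (of_nat (fact m) * pochhammer (c + real j) m))"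
        unfolding A_def add.commute[of m j] by (rule coef_split[OF c])
    qed
    also have "\<dots> = (pochhammer (- real n) j * pochhammer b j / (pochhammer c j * fact j)) *
         (\<Sum>m\<in>{0..n-j}. pochhammer (b + real j) m * pochhammer (- of_nat (n - j)) m / (of_nat (fact m) * pochhammer (c + real j) m))"
      by (simp add: sum_distrib_left)
    also have "(\<Sum>m\<in>{0..n-j}. pochhammer (b + real j) m * pochhammer (- of_nat (n - j)) m / (of_nat (fact m) * pochhammer (c + real j) m))
        = pochhammer (c + real j - (b + real j)) (n - j) / pochhammer (c + real j) (n - j)"
      using c by (intro Vandermonde_pochhammer) (auto simp: add_pos_nonneg neq_iff)
    also have "pochhammer (c + real j - (b + real j)) (n - j) = pochhammer (c - b) (n - j)" by simp
    also have "pochhammer (- real n) j * pochhammer b j / (pochhammer c j * fact j) *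
        (pochhammer (c - b) (n - j) / pochhammer (c + real j) (n - j))
        = pochhammer (- real n) j * pochhammer b j * pochhammer (c - b) (n - j) / (fact j * pochhammer c n)"
    proof -
      have pc: "pochhammer c n = pochhammer c j * pochhammer (c + real j) (n - j)"
        using jn pochhammer_product[of j n c] by simp
      have nz: "pochhammer c j \<noteq> 0" "pochhammer (c + real j) (n - j) \<noteq> 0"
        using c by (simp_all add: pochhammer_pos less_imp_neq[symmetric] add_pos_nonneg)
      show ?thesis unfolding pc using nz by (simp add: field_simps)
    qed
    finally have "(\<Sum>k\<le>n. A k * of_nat (k choose j)) =
       pochhammer (- real n) j * pochhammer b j * pochhammer (c - b) (n - j) / (fact j * pochhammer c n)" .
    then show "(\<Sum>k\<le>n. A k * of_nat (k choose j) * (- z) ^ j) = pochhammer (- real n) j * pochhammer b j * pochhammer (c - b) (n - j)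
             / (fact j * pochhammer c n) * (- z) ^ j"
      by (simp add: sum_distrib_right[symmetric])
  qed
  finally show ?thesis unfolding A_def .
qed

lemma hyp_reflect:
  fixes lam v :: real and n :: nat
  assumes lam: "lam \<ge> 0"
  shows "(-1) ^ n * hyp2F1_term n (real n + 2 * lam + 1) (lam + 3/2) v
       = (lam + 1/2) / (lam + real n + 1/2) * hyp2F1_term n (real n + 2 * lam + 1) (lam + 1/2) (1 - v)"
proof -
  define b where "b = real n + 2 * lam + 1"
  have c: "lam + 3/2 > 0" using lam by simp
  have h1: "hyp2F1_term n b (lam + 3/2) v
      = (\<Sum>j\<le>n. pochhammer (- real n) j * pochhammer b j * pochhammer (lam + 3/2 - b) (n - j)
             / (fact j * pochhammer (lam + 3/2) n) * (- (1 - v)) ^ j)"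
    unfolding hyp2F1_term_def using hyp_reflect_gen[OF c, of n b "1 - v"] by simp
  have h2: "(-1) ^ n * (\<Sum>j\<le>n. pochhammer (- real n) j * pochhammer b j * pochhammer (lam + 3/2 - b) (n - j)
             / (fact j * pochhammer (lam + 3/2) n) * (- (1 - v)) ^ j) = (\<Sum>j\<le>n. (lam + 1/2) / (lam + real n + 1/2) *
      (pochhammer (- real n) j * pochhammer b j / (pochhammer (lam + 1/2) j * fact j) * (1 - v) ^ j))"
    unfolding sum_distrib_left
  proof (intro sum.cong refl)
    fix j assume "j \<in> {..n}"
    then have jn: "j \<le> n" by simp
    have cb: "pochhammer (lam + 3/2 - b) (n - j) = (-1) ^ (n - j) * pochhammer (lam + 1/2 + real j) (n - j)"
    proof -
      have e1: "lam + 3/2 - b = - (lam + real n - 1/2)" unfolding b_def by simp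
      have e2: "lam + real n - 1/2 - of_nat (n - j) + 1 = lam + 1/2 + real j"
        using jn by (simp add: of_nat_diff)
      have "pochhammer (lam + 3/2 - b) (n - j) = pochhammer (- (lam + real n - 1/2)) (n - j)"
        by (simp only: e1)
      also have "\<dots> = (-1) ^ (n - j) * pochhammer (lam + real n - 1/2 - of_nat (n - j) + 1) (n - j)"
        by (rule pochhammer_minus)
      also have "\<dots> = (-1) ^ (n - j) * pochhammer (lam + 1/2 + real j) (n - j)"
        by (simp only: e2)
      finally show ?thesis .
    qed
    have p1: "pochhammer (lam + 1/2) n = pochhammer (lam + 1/2) j * pochhammer (lam + 1/2 + real j) (n - j)"
      using jn pochhammer_product[of j n "lam + 1/2"] by simp
    have p2: "pochhammer (lam + 1/2) n * (lam + 1/2 + real n) = (lam + 1/2) * pochhammer (lam + 3/2) n"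
    proof -
      have "pochhammer (lam + 1/2) (Suc n) = pochhammer (lam + 1/2) n * (lam + 1/2 + real n)"
        by (simp add: pochhammer_rec')
      moreover have "pochhammer (lam + 1/2) (Suc n) = (lam + 1/2) * pochhammer (lam + 3/2) n"
      proof -
        have e: "lam + 1/2 + 1 = lam + 3/2" by simp
        show ?thesis unfolding pochhammer_rec e ..
      qed
      ultimately show ?thesis by simp
    qed
    have sg: "(-1::real) ^ n * ((-1) ^ (n - j) * (-1) ^ j) = 1"
    proof -
      have "(-1::real) ^ (n - j) * (-1) ^ j = (-1) ^ n" using jn by (simp add: power_add[symmetric])
      then show ?thesis by (simp add: power_mult_distrib[symmetric])
    qed
    have nz: "pochhammer (lam + 1/2) j \<noteq> 0" "pochhammer (lam + 1/2 + real j) (n - j) \<noteq> 0"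
       "pochhammer (lam + 3/2) n \<noteq> 0" "(fact j :: real) \<noteq> 0" "lam + real n + 1/2 \<noteq> 0"
      using lam by (simp_all add: pochhammer_pos less_imp_neq[symmetric] add_pos_nonneg)
    have e: "(- (1 - v)) ^ j = (-1) ^ j * (1 - v) ^ j" by (simp add: power_mult_distrib[symmetric])
    define P where "P = pochhammer (lam + 1/2) j"
    define Q where "Q = pochhammer (lam + 1/2 + real j) (n - j)"
    define R where "R = pochhammer (lam + 3/2) n"
    have p2': "P * Q * (lam + 1/2 + real n) = (lam + 1/2) * R"
      using p2 unfolding p1 P_def Q_def R_def .
    have nz': "P \<noteq> 0" "Q \<noteq> 0" "R \<noteq> 0" using nz unfolding P_def Q_def R_def by simp_all
    have "(-1) ^ n * (pochhammer (- real n) j * pochhammer b j * pochhammer (lam + 3/2 - b) (n - j)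
             / (fact j * pochhammer (lam + 3/2) n) * (- (1 - v)) ^ j)
        = ((-1) ^ n * ((-1) ^ (n - j) * (-1) ^ j)) *
          (pochhammer (- real n) j * pochhammer b j * Q / (fact j * R) * (1 - v) ^ j)"
      unfolding cb e Q_def R_def by (simp add: algebra_simps)
    also have "\<dots> = pochhammer (- real n) j * pochhammer b j * Q / (fact j * R) * (1 - v) ^ j"
      unfolding sg by simp
    also have "\<dots> = (lam + 1/2) / (lam + real n + 1/2) *
      (pochhammer (- real n) j * pochhammer b j / (P * fact j) * (1 - v) ^ j)"
    proof -
      define L where "L = lam + 1/2"
      define M where "M = lam + real n + 1/2"
      have L0: "L \<noteq> 0" "M \<noteq> 0" unfolding L_def M_def using lam by auto
      have "lam + 1/2 + real n = M" unfolding M_def by simp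
      then have p3: "P * Q * M = L * R" using p2' unfolding L_def by (simp only:)
      have Rv: "R = P * Q * M / L" using p3 L0 by (simp add: eq_divide_eq)
      have e3: "(lam + 1/2) / (lam + real n + 1/2) = L / M" unfolding L_def M_def ..
      show ?thesis unfolding e3 Rv using nz' nz(4) L0 by (simp add: field_simps)

    qed
    finally show "(-1) ^ n * (pochhammer (- real n) j * pochhammer b j * pochhammer (lam + 3/2 - b) (n - j)
             / (fact j * pochhammer (lam + 3/2) n) * (- (1 - v)) ^ j)
        = (lam + 1/2) / (lam + real n + 1/2) *
      (pochhammer (- real n) j * pochhammer b j / (pochhammer (lam + 1/2) j * fact j) * (1 - v) ^ j)"
      unfolding P_def .
  qed
  show ?thesis unfolding b_def[symmetric] h1 h2 unfolding hyp2F1_term_def sum_distrib_left ..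
qed



lemma beta_affine:
  fixes h c a b :: real
  assumes h: "h > 0" and a: "a > 0" and b: "b > 0"
  shows "((\<lambda>t. ((t / h + c) powr (a - 1) * (1 - (t / h + c)) powr (b - 1))) has_integral h * Beta a b)
           {- c * h .. (1 - c) * h}"
proof -
  have B: "((\<lambda>t. t powr (a - 1) * (1 - t) powr (b - 1)) has_integral Beta a b) (cbox 0 1)"
    using has_integral_Beta_real[OF a b] by simp
  have m: "(1 / h :: real) > 0" using h by simp
  from has_integral_affinity'[OF B m, of c]
  have "((\<lambda>t. ((1 / h) *\<^sub>R t + c) powr (a - 1) * (1 - ((1 / h) *\<^sub>R t + c)) powr (b - 1))
        has_integral Beta a b /\<^sub>R (1 / h) ^ DIM(real)) (cbox ((0 - c) /\<^sub>R (1 / h)) ((1 - c) /\<^sub>R (1 / h)))" .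
  then show ?thesis using h by (simp add: field_simps)
qed

lemma powr_mult_realpow0:
  fixes y a :: real and k :: nat assumes "y \<ge> 0"
  shows "y powr a * y ^ k = y powr (a + real k)"
  using assms by (cases "y = 0") (simp_all add: powr_add powr_realpow)

lemma int_minus_base:
  fixes x a :: real
  assumes x: "x < 1" and a: "a \<ge> 0"
  shows "((\<lambda>t. (t - x) powr (-1/2) * (1 - t) powr a) has_integral
           (1 - x) powr (a + 1/2) * Beta (1/2) (a + 1)) {x..1}"
proof -
  define h where "h = 1 - x"
  have h: "h > 0" using x unfolding h_def by simp
  have I: "((\<lambda>t. ((t / h + (- x / h)) powr (1/2 - 1) * (1 - (t / h + (- x / h))) powr (a + 1 - 1))) has_integral h * Beta (1/2) (a + 1))
           {- (- x / h) * h .. (1 - (- x / h)) * h}"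
    by (rule beta_affine) (use h a in auto)
  have iv: "{- (- x / h) * h .. (1 - (- x / h)) * h} = {x..1}"
    using h unfolding h_def by (simp add: field_simps)
  have I2: "((\<lambda>t. h powr (a - 1/2) * (((t / h + (- x / h)) powr (1/2 - 1) * (1 - (t / h + (- x / h))) powr (a + 1 - 1)))) has_integral
        h powr (a - 1/2) * (h * Beta (1/2) (a + 1))) {x..1}"
    using has_integral_mult_right[OF I] unfolding iv .
  have val: "h powr (a - 1/2) * (h * Beta (1/2) (a + 1)) = (1 - x) powr (a + 1/2) * Beta (1/2) (a + 1)"
  proof -
    have "h powr (a - 1/2) * h = h powr (a - 1/2) * h powr 1" using h by simp
    also have "\<dots> = h powr (a - 1/2 + 1)" by (rule powr_add[symmetric])
    finally have "h powr (a - 1/2) * h = h powr (a + 1/2)" by (simp add: algebra_simps)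
    then show ?thesis unfolding h_def by (simp add: mult.assoc[symmetric])
  qed
  show ?thesis
  proof (rule has_integral_eq[OF _ I2[unfolded val]], goal_cases)
    case (1 t)
    then have t: "x \<le> t" "t \<le> 1" by auto
    have e1: "t / h + - x / h = (t - x) / h" using h by (simp add: field_simps)
    have e2: "1 - (t - x) / h = (1 - t) / h" using h unfolding h_def by (simp add: field_simps)
    have "h powr (a - 1/2) * (((t - x) / h) powr (-1/2) * ((1 - t) / h) powr a)
        = (h powr (a - 1/2) * h powr (- (-1/2)) * h powr (- a)) * ((t - x) powr (-1/2) * (1 - t) powr a)"
      using t h by (simp add: powr_divide powr_minus_divide field_simps)
    also have "h powr (a - 1/2) * h powr (- (-1/2)) * h powr (- a) = 1"
      using h by (simp add: powr_add[symmetric])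
    finally show ?case unfolding e1 e2 by simp
  qed
qed

lemma int_plus_base:
  fixes x a :: real
  assumes x: "x > -1" and a: "a \<ge> 0"
  shows "((\<lambda>t. (x - t) powr (-1/2) * (1 + t) powr a) has_integral
           (1 + x) powr (a + 1/2) * Beta (1/2) (a + 1)) {-1..x}"
proof -
  define h where "h = 1 + x"
  have h: "h > 0" using x unfolding h_def by simp
  have I: "((\<lambda>t. ((t / h + 1 / h) powr (a + 1 - 1) * (1 - (t / h + 1 / h)) powr (1/2 - 1))) has_integral h * Beta (a + 1) (1/2))
           {- (1 / h) * h .. (1 - 1 / h) * h}"
    by (rule beta_affine) (use h a in auto)
  have iv: "{- (1 / h) * h .. (1 - 1 / h) * h} = {-1..x}"
    using h unfolding h_def by (simp add: field_simps)
  have I2: "((\<lambda>t. h powr (a - 1/2) * (((t / h + 1 / h) powr (a + 1 - 1) * (1 - (t / h + 1 / h)) powr (1/2 - 1)))) has_integral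
        h powr (a - 1/2) * (h * Beta (a + 1) (1/2))) {-1..x}"
    using has_integral_mult_right[OF I] unfolding iv .
  have val: "h powr (a - 1/2) * (h * Beta (a + 1) (1/2)) = (1 + x) powr (a + 1/2) * Beta (1/2) (a + 1)"
  proof -
    have "h powr (a - 1/2) * h = h powr (a - 1/2) * h powr 1" using h by simp
    also have "\<dots> = h powr (a - 1/2 + 1)" by (rule powr_add[symmetric])
    finally have "h powr (a - 1/2) * h = h powr (a + 1/2)" by (simp add: algebra_simps)
    then show ?thesis unfolding h_def by (simp add: mult.assoc[symmetric] Beta_commute)
  qed
  show ?thesis
  proof (rule has_integral_eq[OF _ I2[unfolded val]], goal_cases)
    case (1 t)
    then have t: "-1 \<le> t" "t \<le> x" by auto
    have e1: "t / h + 1 / h = (1 + t) / h" using h by (simp add: field_simps)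
    have e2: "1 - (1 + t) / h = (x - t) / h" using h unfolding h_def by (simp add: field_simps)
    have "h powr (a - 1/2) * (((1 + t) / h) powr a * ((x - t) / h) powr (-1/2))
        = (h powr (a - 1/2) * h powr (- (-1/2)) * h powr (- a)) * ((x - t) powr (-1/2) * (1 + t) powr a)"
      using t h by (simp add: powr_divide powr_minus_divide field_simps)
    also have "h powr (a - 1/2) * h powr (- (-1/2)) * h powr (- a) = 1"
      using h by (simp add: powr_add[symmetric])
    finally show ?case unfolding e1 e2 by simp
  qed
qed



lemma term_identity:
  fixes lam h :: real and n k :: nat
  assumes lam: "lam \<ge> 0" and h: "h > 0"
  shows "h powr (- lam + 1/2) * (ecoef (lam + 1/2) n k / 2 ^ k *
           (h powr (lam + real k + 1/2) * Beta (1/2) (lam + real k + 1)))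
       = c_const n lam * h * (pochhammer (- real n) k * pochhammer (real n + 2 * lam + 1) k /
           (pochhammer (lam + 3/2) k * fact k) * (h / 2) ^ k)"
proof -
  have hp: "h powr (- lam + 1/2) * h powr (lam + real k + 1/2) = h * h ^ k"
  proof -
    have "h powr (- lam + 1/2) * h powr (lam + real k + 1/2) = h powr (real (Suc k))"
      by (simp add: powr_add[symmetric] algebra_simps)
    also have "\<dots> = h ^ Suc k" using h by (rule powr_realpow)
    finally show ?thesis by simp
  qed
  have g1: "Gamma (lam + real k + 1) = pochhammer (lam + 1) k * Gamma (lam + 1)"
  proof -
    have "lam + 1 \<notin> \<int>\<^sub>\<le>\<^sub>0" using lam by (auto elim!: nonpos_Ints_cases)
    then have "pochhammer (lam + 1) k = Gamma (lam + 1 + real k) / Gamma (lam + 1)"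
      by (rule pochhammer_Gamma)
    moreover have "Gamma (lam + 1) > 0" using lam by simp
    ultimately show ?thesis by (simp add: field_simps)
  qed
  have g3: "Gamma (lam + real k + 3/2) = pochhammer (lam + 3/2) k * Gamma (lam + 3/2)"
  proof -
    have "lam + 3/2 \<notin> \<int>\<^sub>\<le>\<^sub>0" using lam by (auto elim!: nonpos_Ints_cases)
    then have "pochhammer (lam + 3/2) k = Gamma (lam + 3/2 + real k) / Gamma (lam + 3/2)"
      by (rule pochhammer_Gamma)
    moreover have "Gamma (lam + 3/2) > 0" using lam by simp
    ultimately show ?thesis by (simp add: field_simps)
  qed
  have beta: "Beta (1/2) (lam + real k + 1) = sqrt pi * pochhammer (lam + 1) k * Gamma (lam + 1)
      / (pochhammer (lam + 3/2) k * Gamma (lam + 3/2))"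
  proof -
    have e: "1/2 + (lam + real k + 1) = lam + real k + 3/2" by simp
    show ?thesis unfolding Beta_def Gamma_one_half_real e g1 g3 by simp
  qed
  have ec: "ecoef (lam + 1/2) n k = pochhammer (2 * lam + 1) n / fact n *
     (pochhammer (- real n) k * pochhammer (real n + 2 * lam + 1) k / (pochhammer (lam + 1) k * fact k))"
  proof -
    have e: "2 * (lam + 1/2) = 2 * lam + 1" "real n + (2 * lam + 1) = real n + 2 * lam + 1"
         "lam + 1/2 + 1/2 = lam + 1" by simp_all
    show ?thesis unfolding ecoef_def e ..
  qed
  define PA where "PA = pochhammer (2 * lam + 1) n"
  define F where "F = (fact n :: real)"
  define PN where "PN = pochhammer (- real n) k"
  define PB where "PB = pochhammer (real n + 2 * lam + 1) k"
  define P1 where "P1 = pochhammer (lam + 1) k"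
  define P3 where "P3 = pochhammer (lam + 3/2) k"
  define FK where "FK = (fact k :: real)"
  define G1 where "G1 = Gamma (lam + 1)"
  define G3 where "G3 = Gamma (lam + 3/2)"
  have nz: "F \<noteq> 0" "P1 \<noteq> 0" "P3 \<noteq> 0" "FK \<noteq> 0" "G3 \<noteq> 0" "G1 \<noteq> 0"
    unfolding F_def P1_def P3_def FK_def G1_def G3_def using lam
    by (simp_all add: pochhammer_pos less_imp_neq[symmetric] add_pos_nonneg)
  have lhs: "h powr (- lam + 1/2) * (ecoef (lam + 1/2) n k / 2 ^ k *
           (h powr (lam + real k + 1/2) * Beta (1/2) (lam + real k + 1)))
      = (h * h ^ k) * (PA / F * (PN * PB / (P1 * FK))) / 2 ^ k * (sqrt pi * P1 * G1 / (P3 * G3))"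
    unfolding ec beta hp[symmetric] PA_def F_def PN_def PB_def P1_def P3_def FK_def G1_def G3_def
    by (simp add: algebra_simps)
  have rhs: "c_const n lam * h * (pochhammer (- real n) k * pochhammer (real n + 2 * lam + 1) k /
           (pochhammer (lam + 3/2) k * fact k) * (h / 2) ^ k)
      = sqrt pi * PA / F * (G1 / G3) * h * (PN * PB / (P3 * FK) * (h ^ k / 2 ^ k))"
    unfolding c_const_def PA_def F_def PN_def PB_def P3_def FK_def G1_def G3_def power_divide ..
  show ?thesis unfolding lhs rhs using nz by (simp add: field_simps)
qed



lemma core:
  fixes lam h :: real and D Q :: "real \<Rightarrow> real" and S :: "real set" and n :: nat
  assumes lam: "lam \<ge> 0" and h: "h > 0"
    and base: "\<And>a. a \<ge> 0 \<Longrightarrow> ((\<lambda>t. D t powr (-1/2) * Q t powr a) has_integral h powr (a + 1/2) * Beta (1/2) (a + 1)) S"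
    and Qnn: "\<And>t. t \<in> S \<Longrightarrow> Q t \<ge> 0"
  shows "h powr (- lam + 1/2) * integral S (\<lambda>t. D t powr (-1/2) * Q t powr lam * Epoly (lam + 1/2) n (Q t / 2))
     = c_const n lam * h * hyp2F1_term n (real n + 2 * lam + 1) (lam + 3/2) (h / 2)"
proof -
  have int: "((\<lambda>t. D t powr (-1/2) * Q t powr lam * Epoly (lam + 1/2) n (Q t / 2)) has_integral
     (\<Sum>k\<le>n. ecoef (lam + 1/2) n k / 2 ^ k * (h powr (lam + real k + 1/2) * Beta (1/2) (lam + real k + 1)))) S"
  proof (rule has_integral_eq[OF _ has_integral_sum[of "{..n}" "\<lambda>k t. ecoef (lam + 1/2) n k / 2 ^ k * (D t powr (-1/2) * Q t powr (lam + real k))"]])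
    show "finite {..n}" by simp
  next
    fix k assume "k \<in> {..n}"
    have "lam + real k \<ge> 0" using lam by simp
    from has_integral_mult_right[OF base[OF this], of "ecoef (lam + 1/2) n k / 2 ^ k"]
    show "((\<lambda>t. ecoef (lam + 1/2) n k / 2 ^ k * (D t powr (-1/2) * Q t powr (lam + real k))) has_integral
       ecoef (lam + 1/2) n k / 2 ^ k * (h powr (lam + real k + 1/2) * Beta (1/2) (lam + real k + 1))) S" .
  next
    fix t assume t: "t \<in> S"
    have "D t powr (-1/2) * Q t powr lam * Epoly (lam + 1/2) n (Q t / 2)
        = (\<Sum>k\<le>n. ecoef (lam + 1/2) n k / 2 ^ k * (D t powr (-1/2) * (Q t powr lam * Q t ^ k)))"
      unfolding Epoly_def sum_distrib_left by (intro sum.cong refl) (simp add: power_divide)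
    also have "\<dots> = (\<Sum>k\<le>n. ecoef (lam + 1/2) n k / 2 ^ k * (D t powr (-1/2) * Q t powr (lam + real k)))"
      using Qnn[OF t] by (simp add: powr_mult_realpow0)
    finally show "(\<Sum>k\<le>n. ecoef (lam + 1/2) n k / 2 ^ k * (D t powr (-1/2) * Q t powr (lam + real k)))
        = D t powr (-1/2) * Q t powr lam * Epoly (lam + 1/2) n (Q t / 2)" by simp
  qed
  have "h powr (- lam + 1/2) * integral S (\<lambda>t. D t powr (-1/2) * Q t powr lam * Epoly (lam + 1/2) n (Q t / 2))
      = (\<Sum>k\<le>n. h powr (- lam + 1/2) * (ecoef (lam + 1/2) n k / 2 ^ k * (h powr (lam + real k + 1/2) * Beta (1/2) (lam + real k + 1))))"
    unfolding integral_unique[OF int] sum_distrib_left ..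
  also have "\<dots> = (\<Sum>k\<le>n. c_const n lam * h * (pochhammer (- real n) k * pochhammer (real n + 2 * lam + 1) k /
           (pochhammer (lam + 3/2) k * fact k) * (h / 2) ^ k))"
    using term_identity[OF lam h] by simp
  finally show ?thesis unfolding hyp2F1_term_def sum_distrib_left .
qed



theorem proposition3p1:
  fixes lam x :: real and n :: nat
  assumes "lam \<ge> 0" and "-1 \<le> x" and "x \<le> 1"
  shows "I_plus lam (gegenbauer (lam + 1/2) n) x =
           c_const n lam * ((lam + 1/2) / (lam + real n + 1/2)) * (1 + x) *
           hyp2F1_term n (real n + 2 * lam + 1) (lam + 1/2) ((1 - x) / 2) \<and>
         I_minus lam (gegenbauer (lam + 1/2) n) x =
           c_const n lam * (1 - x) *
           hyp2F1_term n (real n + 2 * lam + 1) (lam + 3/2) ((1 - x) / 2)"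
proof
  have lam: "lam \<ge> 0" using assms(1) .
  have mu: "lam + 1/2 > 0" using lam by simp
  show "I_minus lam (gegenbauer (lam + 1/2) n) x =
           c_const n lam * (1 - x) *
           hyp2F1_term n (real n + 2 * lam + 1) (lam + 3/2) ((1 - x) / 2)"
  proof (cases "x = 1")
    case True
    then show ?thesis by (simp add: I_minus_def)
  next
    case False
    then have x: "x < 1" using assms(3) by simp
    have h: "1 - x > 0" using x by simp
    have eq: "integral {x..1} (\<lambda>t. (t - x) powr (-1/2) * (1 - t) powr lam * gegenbauer (lam + 1/2) n t)
        = integral {x..1} (\<lambda>t. (t - x) powr (-1/2) * (1 - t) powr lam * Epoly (lam + 1/2) n ((1 - t) / 2))"
      using geg_Epoly[OF mu] by simp
    have "(1 - x) powr (- lam + 1/2) * integral {x..1} (\<lambda>t. (t - x) powr (-1/2) * (1 - t) powr lam * Epoly (lam + 1/2) n ((1 - t) / 2))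
        = c_const n lam * (1 - x) * hyp2F1_term n (real n + 2 * lam + 1) (lam + 3/2) ((1 - x) / 2)"
      by (rule core[OF lam h, where D = "\<lambda>t. t - x" and Q = "\<lambda>t. 1 - t"])
         (use int_minus_base[OF x] in auto)
    then show ?thesis unfolding I_minus_def eq .
  qed
  show "I_plus lam (gegenbauer (lam + 1/2) n) x =
           c_const n lam * ((lam + 1/2) / (lam + real n + 1/2)) * (1 + x) *
           hyp2F1_term n (real n + 2 * lam + 1) (lam + 1/2) ((1 - x) / 2)"
  proof (cases "x = -1")
    case True
    then show ?thesis by (simp add: I_plus_def)
  next
    case False
    then have x: "x > -1" using assms(2) by simp
    have h: "1 + x > 0" using x by simp
    have G: "gegenbauer (lam + 1/2) n t = (-1) ^ n * Epoly (lam + 1/2) n ((1 + t) / 2)" for t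
    proof -
      have "gegenbauer (lam + 1/2) n (- t) = (-1) ^ n * gegenbauer (lam + 1/2) n t" by (rule geg_sym)
      then have "gegenbauer (lam + 1/2) n t = (-1) ^ n * gegenbauer (lam + 1/2) n (- t)"
        by (simp add: power_mult_distrib[symmetric])
      also have "gegenbauer (lam + 1/2) n (- t) = Epoly (lam + 1/2) n ((1 + t) / 2)"
        using geg_Epoly[OF mu, of n "- t"] by simp
      finally show ?thesis .
    qed
    have eq: "integral {-1..x} (\<lambda>t. (x - t) powr (-1/2) * (1 + t) powr lam * gegenbauer (lam + 1/2) n t)
        = (-1) ^ n * integral {-1..x} (\<lambda>t. (x - t) powr (-1/2) * (1 + t) powr lam * Epoly (lam + 1/2) n ((1 + t) / 2))"
      unfolding G integral_mult_right[symmetric] by (simp add: algebra_simps)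
    have c: "(1 + x) powr (- lam + 1/2) * integral {-1..x} (\<lambda>t. (x - t) powr (-1/2) * (1 + t) powr lam * Epoly (lam + 1/2) n ((1 + t) / 2))
        = c_const n lam * (1 + x) * hyp2F1_term n (real n + 2 * lam + 1) (lam + 3/2) ((1 + x) / 2)"
      by (rule core[OF lam h, where D = "\<lambda>t. x - t" and Q = "\<lambda>t. 1 + t"])
         (use int_plus_base[OF x] in auto)
    have r: "(-1) ^ n * hyp2F1_term n (real n + 2 * lam + 1) (lam + 3/2) ((1 + x) / 2)
        = (lam + 1/2) / (lam + real n + 1/2) * hyp2F1_term n (real n + 2 * lam + 1) (lam + 1/2) ((1 - x) / 2)"
    proof -
      have e: "1 - (1 + x) / 2 = (1 - x) / 2" by (simp add: field_simps)
      show ?thesis using hyp_reflect[OF lam, of n "(1 + x) / 2"] unfolding e .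
    qed
    have "I_plus lam (gegenbauer (lam + 1/2) n) x
       = (-1) ^ n * ((1 + x) powr (- lam + 1/2) * integral {-1..x} (\<lambda>t. (x - t) powr (-1/2) * (1 + t) powr lam * Epoly (lam + 1/2) n ((1 + t) / 2)))"
      unfolding I_plus_def eq by (simp add: algebra_simps)
    also have "\<dots> = c_const n lam * (1 + x) * ((-1) ^ n * hyp2F1_term n (real n + 2 * lam + 1) (lam + 3/2) ((1 + x) / 2))"
      unfolding c by (simp add: algebra_simps)
    also have "\<dots> = c_const n lam * ((lam + 1/2) / (lam + real n + 1/2)) * (1 + x) *
           hyp2F1_term n (real n + 2 * lam + 1) (lam + 1/2) ((1 - x) / 2)"
      unfolding r by (simp add: algebra_simps)
    finally show ?thesis .
  qed
qed


end
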